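(* Let $A$ be a real $n\times n$ matrix all of whose eigenvalues $\lambda_1,\dots,\lambda_n$ are real and nonzero, and let $J$ be its Jordan normal form. For $\varepsilon\in\mathbb{C}$ and $a\in\mathbb{R}$ let $L_\varepsilon(a)=-\varepsilon a^2\,\mathrm{Id}+\mathrm{i}a\,\mathrm{Id}+\varepsilon J$ and $\Gamma_\varepsilon=\sup_{a\in\mathbb{R}}|L_\varepsilon(a)^{-1}|$. Let $\Omega(\sigma,\mu)=\{\varepsilon\in\mathbb{C}:\ \mathrm{Re}(\varepsilon)\ge\mu|\mathrm{Im}(\varepsilon)|,\ \sigma\le|\varepsilon|\le2\sigma\}$ with $\mu>\mu_0$, $\mu_0$ sufficiently large, and $\sigma>0$ sufficiently small. Then for every $\varepsilon\in\Omega(\sigma,\mu)$, $L_\varepsilon(a)$ is invertible for all $a\in\mathbb{R}$ and $$\Gamma_\varepsilon\le\sigma^{-1}C_{\lambda,\mu},$$ where $C_{\lambda,\mu}>0$ depends only on $\lambda_1,\dots,\lambda_n$ and $\mu$.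
   Context: $|\cdot|$ denotes a matrix norm on $n\times n$ complex matrices. *)

theory Defs
  imports "Jordan_Normal_Form.Jordan_Normal_Form" "HOL-Analysis.Analysis"
begin

text \<open>Matrix norm on complex square matrices: the Frobenius norm (a submultiplicative
matrix norm; all norms on n x n matrices are equivalent with constants depending on n only).\<close>
definition mat_norm :: "complex mat \<Rightarrow> real" where
  "mat_norm M = sqrt (\<Sum>i<dim_row M. \<Sum>j<dim_col M. (cmod (M $$ (i, j)))^2)"

definition mat_inv :: "complex mat \<Rightarrow> complex mat" where
  "mat_inv M = (SOME B. B \<in> carrier_mat (dim_row M) (dim_row M) \<and> inverts_mat M B \<and> inverts_mat B M)"

definition L_mat :: "nat \<Rightarrow> complex mat \<Rightarrow> complex \<Rightarrow> real \<Rightarrow> complex mat" where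
  "L_mat n J eps a = (- eps * (complex_of_real a)^2 + \<i> * complex_of_real a) \<cdot>\<^sub>m 1\<^sub>m n + eps \<cdot>\<^sub>m J"

definition Omega :: "real \<Rightarrow> real \<Rightarrow> complex set" where
  "Omega \<sigma> \<mu> = {eps. Re eps \<ge> \<mu> * \<bar>Im eps\<bar> \<and> \<sigma> \<le> cmod eps \<and> cmod eps \<le> 2 * \<sigma>}"

end

theory Submission
  imports Defs
begin

definition binv :: "complex mat \<Rightarrow> nat \<Rightarrow> complex mat" where
  "binv M n = Matrix.mat n n (\<lambda>(i,j). if i \<le> j then (\<Prod>k\<in>{i..<j}. - M $$ (k, Suc k)) / (\<Prod>k\<in>{i..j}. M $$ (k,k)) else 0)"

lemma binv_right:
  assumes M: "M \<in> carrier_mat n n"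
    and diag: "\<And>i. i < n \<Longrightarrow> M $$ (i,i) \<noteq> 0"
    and zero: "\<And>i j. i < n \<Longrightarrow> j < n \<Longrightarrow> j \<noteq> i \<Longrightarrow> j \<noteq> Suc i \<Longrightarrow> M $$ (i,j) = 0"
  shows "M * binv M n = 1\<^sub>m n"
proof (rule eq_matI)
  let ?B = "binv M n"
  show "dim_row (M * ?B) = dim_row (1\<^sub>m n)" "dim_col (M * ?B) = dim_col (1\<^sub>m n)"
    using M by (auto simp: binv_def)
  fix i j assume i: "i < dim_row (1\<^sub>m n)" and j: "j < dim_col (1\<^sub>m n)"
  then have i: "i < n" and j: "j < n" by auto
  have "(M * ?B) $$ (i,j) = (\<Sum>k<n. M $$ (i,k) * ?B $$ (k,j))"
    using M i j by (auto simp: binv_def scalar_prod_def lessThan_atLeast0 intro!: sum.cong)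
  also have "\<dots> = (\<Sum>k<n. (if k = i then M $$ (i,i) * ?B $$ (i,j) else 0)
       + (if k = Suc i then M $$ (i,Suc i) * ?B $$ (Suc i,j) else 0))"
    by (rule sum.cong) (use i zero in auto)
  also have "\<dots> = M $$ (i,i) * ?B $$ (i,j) + (if Suc i < n then M $$ (i,Suc i) * ?B $$ (Suc i,j) else 0)"
    by (simp add: sum.distrib i)
  also have "\<dots> = 1\<^sub>m n $$ (i,j)"
  proof -
    consider "j < i" | "i = j" | "i < j" by linarith
    then show ?thesis
    proof cases
      case 1 then show ?thesis using i j by (auto simp: binv_def)
    next
      case 2 then show ?thesis using i j diag by (auto simp: binv_def)
    next
      case 3
      then have si: "Suc i < n" "Suc i \<le> j" using j by auto
      have p1: "(\<Prod>k\<in>{i..<j}. - M $$ (k, Suc k)) = - M $$ (i, Suc i) * (\<Prod>k\<in>{Suc i..<j}. - M $$ (k, Suc k))"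
        using 3 by (simp add: prod.atLeast_Suc_lessThan)
      have p2: "(\<Prod>k\<in>{i..j}. M $$ (k,k)) = M $$ (i,i) * (\<Prod>k\<in>{Suc i..j}. M $$ (k,k))"
        using 3 by (simp add: prod.atLeast_Suc_atMost)
      have nz: "(\<Prod>k\<in>{Suc i..j}. M $$ (k,k)) \<noteq> 0" using diag j by (auto simp: prod_zero_iff)
      show ?thesis using 3 si i j diag[OF i] nz unfolding binv_def
        by (simp add: p1 p2 field_simps)
    qed
  qed
  finally show "(M * ?B) $$ (i,j) = 1\<^sub>m n $$ (i,j)" .
qed

lemma binv_carrier: "binv M n \<in> carrier_mat n n" by (simp add: binv_def)

lemma mat_inv_unique:
  assumes M: "M \<in> carrier_mat n n" and B: "B \<in> carrier_mat n n" and MB: "M * B = 1\<^sub>m n"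
  shows "invertible_mat M \<and> mat_inv M = B"
proof -
  have BM: "B * M = 1\<^sub>m n" using mat_mult_left_right_inverse[OF M B MB] .
  have inv: "invertible_mat M" using M B MB BM
    unfolding invertible_mat_def inverts_mat_def square_mat.simps by auto
  have ex: "\<exists>B'. B' \<in> carrier_mat (dim_row M) (dim_row M) \<and> inverts_mat M B' \<and> inverts_mat B' M"
    using M B MB BM unfolding inverts_mat_def by auto
  define B' where "B' = mat_inv M"
  have B': "B' \<in> carrier_mat n n" "M * B' = 1\<^sub>m n" "B' * M = 1\<^sub>m n"
    using someI_ex[OF ex] M unfolding B'_def mat_inv_def inverts_mat_def by auto
  have "B' = B' * (M * B)" using B' by (simp add: MB)
  also have "\<dots> = (B' * M) * B" by (metis assoc_mult_mat B'(1) M B)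
  also have "\<dots> = B" using B' B by simp
  finally show ?thesis using inv B'_def by simp
qed

lemma frob_bound:
  assumes B: "B \<in> carrier_mat n n" and K: "K \<ge> 0"
    and bd: "\<And>i j. i < n \<Longrightarrow> j < n \<Longrightarrow> cmod (B $$ (i,j)) \<le> K"
  shows "mat_norm B \<le> real n * K"
proof -
  have "(\<Sum>i<dim_row B. \<Sum>j<dim_col B. (cmod (B $$ (i, j)))^2) = (\<Sum>i<n. \<Sum>j<n. (cmod (B $$ (i, j)))^2)"
    using B by simp
  also have "\<dots> \<le> (\<Sum>i<n. \<Sum>j<n. K^2)"
    by (intro sum_mono power_mono) (auto intro: bd)
  also have "\<dots> = (real n * K)^2" by (simp add: power2_eq_square)
  finally show ?thesis unfolding mat_norm_def using K
    by (metis abs_of_nonneg mult_nonneg_nonneg of_nat_0_le_iff real_sqrt_abs real_sqrt_le_mono)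
qed

lemma binv_bound:
  assumes ij: "i \<le> j" "j < n" and E: "E \<ge> 0" and d: "\<delta> > 0"
    and sup: "\<And>k. Suc k < n \<Longrightarrow> cmod (M $$ (k, Suc k)) \<le> E"
    and dg: "\<And>k. k < n \<Longrightarrow> cmod (M $$ (k, k)) \<ge> \<delta>"
  shows "cmod (binv M n $$ (i,j)) \<le> E^(j-i) / \<delta>^(Suc (j-i))"
proof -
  have eq: "cmod (binv M n $$ (i,j)) = (\<Prod>k\<in>{i..<j}. cmod (M $$ (k, Suc k))) / (\<Prod>k\<in>{i..j}. cmod (M $$ (k,k)))"
    using ij by (simp add: binv_def norm_divide prod_norm[symmetric])
  have num: "(\<Prod>k\<in>{i..<j}. cmod (M $$ (k, Suc k))) \<le> (\<Prod>k\<in>{i..<j}. E)"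
    by (rule prod_mono) (use ij sup in auto)
  have den: "(\<Prod>k\<in>{i..j}. \<delta>) \<le> (\<Prod>k\<in>{i..j}. cmod (M $$ (k,k)))"
    by (rule prod_mono) (use ij dg d in auto)
  have c1: "(\<Prod>k\<in>{i..<j}. E) = E^(j-i)" by simp
  have c2: "(\<Prod>k\<in>{i..j}. \<delta>) = \<delta>^(Suc (j-i))" using ij by (simp add: Suc_diff_le)
  show ?thesis unfolding eq
    apply (rule frac_le)
    using num den c1 c2 d E by (auto intro: prod_nonneg)
qed

lemma real_bound:
  fixes e c0 \<sigma> :: real
  assumes "c0 > 0" "\<sigma> > 0" "\<sigma> \<le> e" "k \<le> n"
  shows "e^k / (c0*e)^(Suc k) \<le> (max 1 (1/c0))^n / (c0*\<sigma>)"
proof -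
  have e: "e > 0" using assms by simp
  have "e^k / (c0*e)^(Suc k) = (1/c0)^k / (c0*e)"
    using e assms(1) by (simp add: power_mult_distrib field_simps)
  also have "\<dots> \<le> (max 1 (1/c0))^n / (c0*e)"
  proof -
    have "(1/c0)^k \<le> (max 1 (1/c0))^k" by (rule power_mono) (use assms in auto)
    also have "\<dots> \<le> (max 1 (1/c0))^n" by (rule power_increasing) (use assms in auto)
    finally show ?thesis using e assms(1) by (simp add: divide_right_mono)
  qed
  also have "\<dots> \<le> (max 1 (1/c0))^n / (c0*\<sigma>)"
    by (rule divide_left_mono) (use assms in \<open>auto intro: mult_left_mono\<close>)
  finally show ?thesis .
qed

lemma d_bound:
  fixes e :: complex and l a m \<Lambda> s \<sigma> :: real
  assumes m: "m > 0" "m \<le> \<bar>l\<bar>" "\<bar>l\<bar> \<le> \<Lambda>"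
    and e: "\<bar>Im e\<bar> \<le> Re e" "cmod e \<le> 2*\<sigma>" and sg: "\<sigma> > 0"
    and s: "s = sqrt (m/2)" "\<sigma>*\<Lambda> \<le> s/2" "\<sigma>*m \<le> s"
  shows "cmod (e * complex_of_real (l - a^2) + \<i> * complex_of_real a) \<ge> m/4 * cmod e"
proof -
  define z where "z = e * complex_of_real (l - a^2) + \<i> * complex_of_real a"
  have Rez: "Re z = Re e * (l - a^2)" and Imz: "Im z = Im e * (l - a^2) + a" by (simp_all add: z_def)
  have Re: "Re e \<ge> cmod e / 2" using cmod_le[of e] e by linarith
  show ?thesis
  proof (cases "\<bar>l - a^2\<bar> \<ge> \<bar>l\<bar>/2")
    case True
    have "m/4 * cmod e \<le> (cmod e / 2) * (\<bar>l\<bar>/2)" using mult_left_mono[OF m(2) norm_ge_zero[of e]] by (simp add: mult.commute)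
    also have "\<dots> \<le> Re e * \<bar>l - a^2\<bar>" using True Re e(1) by (intro mult_mono) (auto simp del: abs_ge_zero intro: order_trans[OF abs_ge_zero])
    also have "\<dots> = \<bar>Re z\<bar>" proof -
      have r0: "Re e \<ge> 0" using e(1) by linarith
      show ?thesis unfolding Rez abs_mult using abs_of_nonneg[OF r0] by simp
    qed
    also have "\<dots> \<le> cmod z" by (rule abs_Re_le_cmod)
    finally show ?thesis by (simp add: z_def)
  next
    case False
    have a2: "a^2 \<ge> 0" by simp
    have lpos: "l > 0"
    proof (rule ccontr)
      assume "\<not> 0 < l"
      then have "l \<le> 0" by simp
      moreover have "l - a^2 \<le> 0" using a2 \<open>l \<le> 0\<close> by linarith
      ultimately have "\<bar>l - a^2\<bar> = - (l - a^2)" "\<bar>l\<bar> = - l" by (simp_all only: abs_of_nonpos)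
      then show False using False a2 by linarith
    qed
    have "\<bar>l\<bar> = l" using lpos by simp
    then have "a^2 \<ge> m/2" using False m abs_ge_self[of "l - a^2"] by linarith
    then have "sqrt (a^2) \<ge> s" using s by (simp add: real_sqrt_le_mono del: real_sqrt_abs)
    then have as: "\<bar>a\<bar> \<ge> s" by simp
    have h1: "\<bar>Im e\<bar> \<le> 2*\<sigma>" using abs_Im_le_cmod[of e] e by linarith
    have h2: "\<bar>l - a^2\<bar> \<le> \<bar>l\<bar>/2" using False by linarith
    from h1 h2 have "\<bar>Im e\<bar> * \<bar>l - a^2\<bar> \<le> 2*\<sigma> * (\<bar>l\<bar>/2)"
      by (rule mult_mono) (use sg in auto)
    then have "\<bar>Im e * (l - a^2)\<bar> \<le> 2*\<sigma> * (\<bar>l\<bar>/2)" by (simp only: abs_mult)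
    also have "\<dots> \<le> s/2"
    proof -
      have "\<sigma>*\<bar>l\<bar> \<le> \<sigma>*\<Lambda>" using m sg by (intro mult_left_mono) auto
      then show ?thesis using s by linarith
    qed
    finally have "\<bar>Im z\<bar> \<ge> s/2" using Imz as by linarith
    moreover have "m/4 * cmod e \<le> s/2"
    proof -
      have "m * cmod e \<le> m * (2*\<sigma>)" using e(2) m by (intro mult_left_mono) auto
      moreover have "m/4 * cmod e = (m * cmod e)/4" "m * (2*\<sigma>) = 2*(\<sigma>*m)" by simp_all
      ultimately show ?thesis using s by linarith
    qed
    ultimately show ?thesis using abs_Im_le_cmod[of z] by (simp add: z_def)
  qed
qed

lemma jm_struct:
  fixes n_as :: "(nat \<times> 'a::{zero,one}) list"
  assumes "i < sum_list (map fst n_as)" "j < sum_list (map fst n_as)"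
  shows "(i = j \<longrightarrow> (\<exists>m b. (m,b) \<in> set n_as \<and> m > 0 \<and> jordan_matrix n_as $$ (i,j) = b))
       \<and> (j = Suc i \<longrightarrow> jordan_matrix n_as $$ (i,j) \<in> {0,1})
       \<and> (j \<noteq> i \<and> j \<noteq> Suc i \<longrightarrow> jordan_matrix n_as $$ (i,j) = 0)"
  using assms
proof (induction n_as arbitrary: i j)
  case Nil
  then show ?case by simp
next
  case (Cons p n_as)
  obtain m b where p: "p = (m,b)" by fastforce
  let ?N = "sum_list (map fst n_as)"
  have eq: "jordan_matrix (p # n_as) $$ (i,j) = (if i < m then
      if j < m then jordan_block m b $$ (i,j) else 0
      else if j < m then 0 else jordan_matrix n_as $$ (i - m, j - m))"
    unfolding p jordan_matrix_Cons using Cons.prems p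
    by (subst index_mat_four_block) auto
  show ?case
  proof (cases "i < m")
    case True
    then show ?thesis using Cons.prems p eq by (auto simp: jordan_block_index)
  next
    case False
    then have "i - m < ?N" "j \<ge> m \<longrightarrow> j - m < ?N" using Cons.prems p by auto
    note IH = Cons.IH[of "i - m" "j - m"]
    show ?thesis
    proof (cases "j < m")
      case True
      then show ?thesis using False eq by auto
    next
      case False2: False
      then have "j - m < ?N" using Cons.prems p by auto
      note ih = IH[OF \<open>i - m < ?N\<close> this]
      have e2: "jordan_matrix (p # n_as) $$ (i,j) = jordan_matrix n_as $$ (i - m, j - m)"
        using eq False False2 by auto
      show ?thesis unfolding e2 using ih False False2 by (auto simp: Suc_diff_le)
    qed
  qed
qed


lemma root_lam: "poly (\<Prod>l\<leftarrow>lam. [:- complex_of_real l, 1:]) b = 0 \<Longrightarrow> \<exists>l\<in>set lam. b = complex_of_real l"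
  by (induction lam) auto

lemma root_jm: "(m, b) \<in> set n_as \<Longrightarrow> m > 0 \<Longrightarrow> poly (\<Prod>(n, a)\<leftarrow>n_as. [:- a, 1:] ^ n) (b::complex) = 0"
  by (induction n_as) auto

theorem proposition5p1:
  fixes lam :: "real list"
  assumes "\<forall>l \<in> set lam. l \<noteq> 0"
  shows "\<exists>\<mu>0. \<forall>\<mu> > \<mu>0. \<exists>C > 0. \<exists>\<sigma>0 > 0. \<forall>\<sigma>. 0 < \<sigma> \<and> \<sigma> < \<sigma>0 \<longrightarrow>
          (\<forall>(A :: real mat) n_as eps. A \<in> carrier_mat (length lam) (length lam)
             \<and> char_poly (map_mat complex_of_real A) = (\<Prod>l\<leftarrow>lam. [:- complex_of_real l, 1:])
             \<and> jordan_nf (map_mat complex_of_real A) n_as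
             \<and> eps \<in> Omega \<sigma> \<mu> \<longrightarrow>
               (\<forall>a :: real. invertible_mat (L_mat (length lam) (jordan_matrix n_as) eps a)
                 \<and> mat_norm (mat_inv (L_mat (length lam) (jordan_matrix n_as) eps a)) \<le> C / \<sigma>))"
proof -
  define n where "n = length lam"
  define S where "S = insert 1 (abs ` set lam)"
  define m where "m = Min S"
  define \<Lambda> where "\<Lambda> = Max S"
  have finS: "finite S" "S \<noteq> {}" unfolding S_def by auto
  have Spos: "\<forall>x\<in>S. x > 0" using assms unfolding S_def by auto
  have m0: "m > 0" using Min_in[OF finS] Spos unfolding m_def by auto
  have mle: "\<And>l. l \<in> set lam \<Longrightarrow> m \<le> \<bar>l\<bar>" unfolding m_def S_def by (rule Min_le) (use finS S_def in auto)
  have Lge: "\<And>l. l \<in> set lam \<Longrightarrow> \<bar>l\<bar> \<le> \<Lambda>" unfolding \<Lambda>_def S_def by (rule Max_ge) (use finS S_def in auto)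
  have L1: "\<Lambda> \<ge> 1" unfolding \<Lambda>_def S_def by (rule Max_ge) (use finS S_def in auto)
  define s where "s = sqrt (m/2)"
  have s0: "s > 0" using m0 unfolding s_def by simp
  define c0 where "c0 = m/4"
  have c00: "c0 > 0" using m0 unfolding c0_def by simp
  define R where "R = max 1 (1/c0)"
  define C where "C = (real n + 1) * R^n / c0"
  have R1: "R \<ge> 1" unfolding R_def by simp
  have C0: "C > 0" unfolding C_def using c00 R1 by (simp add: zero_less_power)
  define \<sigma>0 where "\<sigma>0 = min (s/(2*\<Lambda>)) (s/m)"
  have sg0: "\<sigma>0 > 0" unfolding \<sigma>0_def using s0 m0 L1 by simp
  show ?thesis
  proof (rule exI[of _ 1], intro allI impI, rule exI[of _ C], rule conjI[OF C0], rule exI[of _ \<sigma>0], rule conjI[OF sg0], intro allI impI)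
    fix \<mu> \<sigma> :: real and A :: "real mat" and n_as eps a
    assume mu: "\<mu> > 1" and sg: "0 < \<sigma> \<and> \<sigma> < \<sigma>0"
      and H: "A \<in> carrier_mat (length lam) (length lam)
             \<and> char_poly (map_mat complex_of_real A) = (\<Prod>l\<leftarrow>lam. [:- complex_of_real l, 1:])
             \<and> jordan_nf (map_mat complex_of_real A) n_as
             \<and> eps \<in> Omega \<sigma> \<mu>"
    have sgp: "\<sigma> > 0" using sg by simp
    have sL: "\<sigma>*\<Lambda> \<le> s/2"
    proof -
      have "\<sigma> \<le> s/(2*\<Lambda>)" using sg unfolding \<sigma>0_def by simp
      then show ?thesis using L1 by (simp add: field_simps)
    qed
    have sm: "\<sigma>*m \<le> s"
    proof -
      have "\<sigma> \<le> s/m" using sg unfolding \<sigma>0_def by simp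
      then show ?thesis using m0 by (simp add: field_simps)
    qed
    have epsO: "Re eps \<ge> \<mu> * \<bar>Im eps\<bar>" "\<sigma> \<le> cmod eps" "cmod eps \<le> 2*\<sigma>"
      using H unfolding Omega_def by auto
    have ImRe: "\<bar>Im eps\<bar> \<le> Re eps"
    proof -
      have "\<bar>Im eps\<bar> \<le> \<mu> * \<bar>Im eps\<bar>" using mult_right_mono[of 1 \<mu> "\<bar>Im eps\<bar>"] mu by simp
      then show ?thesis using epsO by linarith
    qed
    define Ac where "Ac = map_mat complex_of_real A"
    define J where "J = jordan_matrix n_as"
    have Ac: "Ac \<in> carrier_mat n n" using H unfolding Ac_def n_def by auto
    have sim: "similar_mat Ac J" using H unfolding jordan_nf_def Ac_def J_def by auto
    have J: "J \<in> carrier_mat n n"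
      using similar_matD[OF sim] Ac by auto
    have Ndim: "sum_list (map fst n_as) = n" using J unfolding J_def by auto
    have cpJ: "char_poly J = (\<Prod>l\<leftarrow>lam. [:- complex_of_real l, 1:])"
      using char_poly_similar[OF sim] H unfolding Ac_def by simp
    have Jdiag: "\<exists>l\<in>set lam. J $$ (i,i) = complex_of_real l" if i: "i < n" for i
    proof -
      from jm_struct[of i n_as i] i Ndim obtain m' b where mb: "(m',b) \<in> set n_as" "m' > 0" "J $$ (i,i) = b"
        unfolding J_def by auto
      have "poly (char_poly J) b = 0" unfolding J_def jordan_matrix_char_poly using root_jm[OF mb(1,2)] .
      then show ?thesis using root_lam[of lam b] cpJ mb(3) by auto
    qed
    have Jsup: "J $$ (i, Suc i) \<in> {0,1}" if "i < n" "Suc i < n" for i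
      using jm_struct[of i n_as "Suc i"] that Ndim unfolding J_def by auto
    have Jzero: "J $$ (i, j) = 0" if "i < n" "j < n" "j \<noteq> i" "j \<noteq> Suc i" for i j
      using jm_struct[of i n_as j] that Ndim unfolding J_def by auto
    define L where "L = L_mat n J eps a"
    have Lc: "L \<in> carrier_mat n n" using J unfolding L_def L_mat_def by auto
    have Lij: "L $$ (i,j) = (if i = j then - eps * (complex_of_real a)^2 + \<i> * complex_of_real a else 0) + eps * J $$ (i,j)"
      if "i < n" "j < n" for i j
      using that J unfolding L_def L_mat_def by auto
    have Ldiag: "cmod (L $$ (i,i)) \<ge> c0 * cmod eps" if i: "i < n" for i
    proof -
      obtain l where l: "l \<in> set lam" "J $$ (i,i) = complex_of_real l" using Jdiag[OF i] by auto
      have "L $$ (i,i) = eps * complex_of_real (l - a^2) + \<i> * complex_of_real a"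
        using Lij[OF i i] l by (simp add: algebra_simps)
      moreover have "cmod (eps * complex_of_real (l - a^2) + \<i> * complex_of_real a) \<ge> m/4 * cmod eps"
        by (rule d_bound[OF m0 mle[OF l(1)] Lge[OF l(1)] ImRe epsO(3) sgp s_def sL sm])
      ultimately show ?thesis unfolding c0_def by simp
    qed
    have epspos: "cmod eps > 0" using epsO sgp by linarith
    have Ldiag0: "L $$ (i,i) \<noteq> 0" if "i < n" for i
    proof -
      have "c0 * cmod eps > 0" using c00 epspos by simp
      then show ?thesis using Ldiag[OF that] by auto
    qed
    have Lzero: "L $$ (i,j) = 0" if "i < n" "j < n" "j \<noteq> i" "j \<noteq> Suc i" for i j
      using Lij[OF that(1,2)] Jzero[OF that] that by simp
    have Lsup: "cmod (L $$ (k, Suc k)) \<le> cmod eps" if "Suc k < n" for k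
    proof -
      have k: "k < n" using that by simp
      show ?thesis using Lij[OF k that] Jsup[OF k that] by (auto simp: norm_mult)
    qed
    define B where "B = binv L n"
    have LB: "L * B = 1\<^sub>m n" unfolding B_def by (rule binv_right[OF Lc Ldiag0 Lzero])
    have inv: "invertible_mat L \<and> mat_inv L = B" by (rule mat_inv_unique[OF Lc _ LB]) (simp add: B_def binv_carrier)
    define K where "K = R^n / (c0*\<sigma>)"
    have K0: "K \<ge> 0" unfolding K_def using c00 sgp R1 by simp
    have Bbd: "cmod (B $$ (i,j)) \<le> K" if "i < n" "j < n" for i j
    proof (cases "i \<le> j")
      case True
      have "cmod (B $$ (i,j)) \<le> (cmod eps)^(j-i) / (c0 * cmod eps)^(Suc (j-i))"
        unfolding B_def
        by (rule binv_bound[OF True that(2) norm_ge_zero _ Lsup Ldiag]) (use c00 epspos in auto)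
      also have "\<dots> \<le> K" unfolding K_def R_def
        by (rule real_bound) (use c00 sgp epsO that in auto)
      finally show ?thesis .
    next
      case False
      then show ?thesis using that K0 by (simp add: B_def binv_def)
    qed
    have "mat_norm B \<le> real n * K" by (rule frob_bound[OF _ K0 Bbd]) (simp add: B_def binv_carrier)
    also have "\<dots> \<le> C / \<sigma>"
    proof -
      have "real n * K \<le> (real n + 1) * K" using K0 by (simp add: mult_right_mono)
      also have "\<dots> = C / \<sigma>" unfolding K_def C_def using c00 sgp by (simp add: field_simps)
      finally show ?thesis .
    qed
    finally show "invertible_mat (L_mat (length lam) (jordan_matrix n_as) eps a)
                 \<and> mat_norm (mat_inv (L_mat (length lam) (jordan_matrix n_as) eps a)) \<le> C / \<sigma>"
      using inv unfolding L_def J_def n_def by simp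
  qed
qed

end
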